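(* Let $q$ be a prime power, $k\ge1$ and $n\ge 2k+1$. If $\mathcal{L}$ is a Cameron-Liebler $k$-set of $\mathrm{AG}(n,q)$ with parameter $x=1$, then $\mathcal{L}$ consists of all affine $k$-spaces through some fixed affine point.
   Context: $\mathrm{AG}(n,q)$ is $\mathrm{PG}(n,q)$ with a hyperplane $\pi_\infty$ removed; affine points are points outside $\pi_\infty$, affine $k$-spaces are $k$-dimensional projective subspaces not contained in $\pi_\infty$. With $A_n$ the incidence matrix of affine points versus affine $k$-spaces, a set $\mathcal{L}$ of affine $k$-spaces is a Cameron-Liebler $k$-set of $\mathrm{AG}(n,q)$ if its characteristic vector lies in the real row space $\mathrm{Im}(A_n^T)$; its parameter is $|\mathcal{L}|/\left[{n\atop k}\right]_q$ with $\left[{a\atop b}\right]_q=\frac{(q^a-1)\cdots(q^{a-b+1}-1)}{(q^b-1)\cdots(q-1)}$. *)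

theory Defs
  imports "HOL-Analysis.Analysis"
begin

text \<open>AG(n,q) is modelled as the vector space F^n over a finite field F with |F| = q
  (every prime power q is the order of some finite field, and every finite field has
  prime power order). The dimension n is CARD('n).\<close>

definition vsmult :: "'F::field \<Rightarrow> 'F ^ 'n \<Rightarrow> 'F ^ 'n" where
  "vsmult c x = (\<chi> i. c * x $ i)"

definition affine_kspace :: "nat \<Rightarrow> ('F::field ^ 'n) set \<Rightarrow> bool" where
  "affine_kspace k S \<longleftrightarrow>
     (\<exists>p v. (\<forall>c::nat \<Rightarrow> 'F. (\<Sum>j<k. vsmult (c j) (v j)) = 0 \<longrightarrow> (\<forall>j<k. c j = 0))
          \<and> S = {p + (\<Sum>j<k. vsmult (c j) (v j)) | c. True})"

definition affine_kspaces :: "nat \<Rightarrow> ('F::field ^ 'n) set set" where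
  "affine_kspaces k = {S. affine_kspace k S}"

text \<open>Cameron-Liebler k-set: the characteristic vector of L (indexed by affine k-spaces)
  lies in Im(A_n^T), where A_n is the point/k-space incidence matrix; i.e. there is a real
  weight w on affine points such that chi_L(K) = sum of w(P) over points P in K, for every
  affine k-space K.\<close>
definition cameron_liebler :: "nat \<Rightarrow> ('F::{field,finite} ^ 'n) set set \<Rightarrow> bool" where
  "cameron_liebler k L \<longleftrightarrow> L \<subseteq> affine_kspaces k \<and>
     (\<exists>w :: 'F ^ 'n \<Rightarrow> real. \<forall>K \<in> affine_kspaces k.
        (if K \<in> L then 1 else 0) = (\<Sum>P\<in>K. w P))"

definition gauss_binom :: "nat \<Rightarrow> nat \<Rightarrow> real \<Rightarrow> real" where
  "gauss_binom a b q = (\<Prod>i<b. (q ^ (a - i) - 1)) / (\<Prod>i<b. (q ^ (i + 1) - 1))"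

definition cl_parameter :: "nat \<Rightarrow> ('F::{field,finite} ^ 'n) set set \<Rightarrow> real" where
  "cl_parameter k L = real (card L) / gauss_binom CARD('n) k (real CARD('F))"

end

theory Submission
  imports Defs
begin


lemma vsmult_eq: "vsmult = (*s)"
  by (auto simp: vsmult_def fun_eq_iff vec_eq_iff)

definition spn :: "nat \<Rightarrow> (nat \<Rightarrow> 'F::field ^ 'n) \<Rightarrow> ('F ^ 'n) set" where
  "spn k v = {(\<Sum>j<k. c j *s v j) | c. True}"

definition indep :: "nat \<Rightarrow> (nat \<Rightarrow> 'F::field ^ 'n) \<Rightarrow> bool" where
  "indep k v \<longleftrightarrow> (\<forall>c. (\<Sum>j<k. c j *s v j) = 0 \<longrightarrow> (\<forall>j<k. c j = 0))"

lemma affine_kspace_iff: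
  "affine_kspace k S \<longleftrightarrow> (\<exists>p v. indep k v \<and> S = (+) p ` spn k v)"
  unfolding affine_kspace_def indep_def spn_def vsmult_eq by auto

lemma spn_I: "x = (\<Sum>j<k. c j *s v j) \<Longrightarrow> x \<in> spn k v"
  unfolding spn_def by blast

lemma spn_0: "0 \<in> spn k v"
  unfolding spn_def by (auto intro!: exI[of _ "\<lambda>_. 0"])

lemma spn_add: "x \<in> spn k v \<Longrightarrow> y \<in> spn k v \<Longrightarrow> x + y \<in> spn k v"
proof -
  assume "x \<in> spn k v" "y \<in> spn k v"
  then obtain c d where "x = (\<Sum>j<k. c j *s v j)" "y = (\<Sum>j<k. d j *s v j)"
    unfolding spn_def by auto
  then have "x + y = (\<Sum>j<k. (c j + d j) *s v j)"
    by (simp add: sum.distrib vector_sadd_rdistrib)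
  then show ?thesis by (rule spn_I)
qed

lemma spn_scale: "x \<in> spn k v \<Longrightarrow> a *s x \<in> spn k v"
proof -
  assume "x \<in> spn k v"
  then obtain c where "x = (\<Sum>j<k. c j *s v j)"
    unfolding spn_def by auto
  then have "a *s x = (\<Sum>j<k. (a * c j) *s v j)"
    by (simp add: vec.scale_sum_right)
  then show ?thesis by (rule spn_I)
qed

lemma spn_neg: "x \<in> spn k v \<Longrightarrow> - x \<in> spn k v"
  using spn_scale[of x k v "-1"] by simp

lemma spn_diff: "x \<in> spn k v \<Longrightarrow> y \<in> spn k v \<Longrightarrow> x - y \<in> spn k v"
  using spn_add[of x k v "-y"] spn_neg[of y k v] by simp

lemma spn_base: "j < k \<Longrightarrow> v j \<in> spn k v"
proof -
  assume j: "j < k"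
  have "(\<Sum>i<k. (if i = j then 1 else 0) *s v i) = (\<Sum>i<k. if i = j then v i else 0)"
    by (rule sum.cong) auto
  also have "\<dots> = v j" using j by (simp add: sum.delta)
  finally show ?thesis by (rule spn_I[OF sym])
qed

lemma spn_sum: "(\<And>j. j < m \<Longrightarrow> x j \<in> spn k v) \<Longrightarrow> (\<Sum>j<m. c j *s x j) \<in> spn k v"
  for m :: nat
  by (induction m) (simp_all add: spn_0 spn_add spn_scale)

lemma spn_subset: "(\<And>j. j < m \<Longrightarrow> x j \<in> spn k v) \<Longrightarrow> spn m x \<subseteq> spn k v"
  using spn_sum unfolding spn_def by blast

lemma spn_restrict: "spn k (restrict v {..<k}) = spn k v"
  unfolding spn_def by auto

lemma indep_restrict: "indep k (restrict v {..<k}) = indep k v"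
  unfolding indep_def by auto


lemma card_spn:
  assumes "indep k (v :: nat \<Rightarrow> 'F::{field,finite} ^ 'n)"
  shows "card (spn k v) = CARD('F) ^ k"
proof -
  let ?g = "\<lambda>c. (\<Sum>j<k. c j *s v j)"
  have "spn k v = ?g ` ({..<k} \<rightarrow>\<^sub>E (UNIV :: 'F set))"
  proof
    show "spn k v \<subseteq> ?g ` ({..<k} \<rightarrow>\<^sub>E UNIV)"
    proof
      fix x assume "x \<in> spn k v"
      then obtain c where x: "x = ?g c" unfolding spn_def by auto
      have "x = ?g (restrict c {..<k})" unfolding x by simp
      then show "x \<in> ?g ` ({..<k} \<rightarrow>\<^sub>E UNIV)" by (intro image_eqI[where x="restrict c {..<k}"]) auto
    qed
  next
    show "?g ` ({..<k} \<rightarrow>\<^sub>E UNIV) \<subseteq> spn k v"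
      by (auto intro!: spn_I[OF refl])
  qed
  moreover have "inj_on ?g ({..<k} \<rightarrow>\<^sub>E UNIV)"
  proof (rule inj_onI)
    fix c d assume c: "c \<in> {..<k} \<rightarrow>\<^sub>E (UNIV :: 'F set)" and d: "d \<in> {..<k} \<rightarrow>\<^sub>E (UNIV :: 'F set)"
      and eq: "?g c = ?g d"
    have "(\<Sum>j<k. (c j - d j) *s v j) = ?g c - ?g d"
      by (simp add: vector_sub_rdistrib sum_subtractf)
    also have "\<dots> = 0" using eq by simp
    finally have "\<forall>j<k. c j - d j = 0" using assms[unfolded indep_def, rule_format, of "\<lambda>j. c j - d j"] by blast
    then show "c = d" using c d by (intro PiE_ext) auto
  qed
  ultimately have "card (spn k v) = card ({..<k} \<rightarrow>\<^sub>E (UNIV :: 'F set))"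
    by (simp add: card_image)
  also have "\<dots> = CARD('F) ^ k" by (simp add: card_PiE)
  finally show ?thesis .
qed

lemma indep_Suc:
  "indep (Suc k) (v(k := y)) \<longleftrightarrow> indep k v \<and> y \<notin> spn k v"
proof -
  have s: "(\<Sum>j<k. c j *s (v(k := y)) j) = (\<Sum>j<k. c j *s v j)" for c :: "nat \<Rightarrow> 'a"
    by (rule sum.cong) auto
  show ?thesis
  proof
    assume H: "indep (Suc k) (v(k := y))"
    have "indep k v" unfolding indep_def
    proof (intro allI impI)
      fix c j assume c: "(\<Sum>j<k. c j *s v j) = 0" and j: "j < k"
      have "(\<Sum>j<Suc k. (c(k := 0)) j *s (v(k := y)) j) = (\<Sum>j<k. (c(k := 0)) j *s (v(k := y)) j)"
        by simp
      also have "\<dots> = (\<Sum>j<k. c j *s v j)" by (rule sum.cong) auto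
      finally have "(\<Sum>j<Suc k. (c(k := 0)) j *s (v(k := y)) j) = 0" using c by simp
      then have "(c(k := 0)) j = 0" using H[unfolded indep_def, rule_format, of "c(k:=0)" j] j by linarith
      then show "c j = 0" using j by auto
    qed
    moreover have "y \<notin> spn k v"
    proof
      assume "y \<in> spn k v"
      then obtain c where y: "y = (\<Sum>j<k. c j *s v j)" unfolding spn_def by auto
      have "(\<Sum>j<Suc k. (c(k := -1)) j *s (v(k := y)) j) = 0"
        using s[of "c(k:=-1)"] y by simp
      then have "(c(k := -1)) k = 0" using H[unfolded indep_def, rule_format, of "c(k:=-1)" k] by blast
      then show False by simp
    qed
    ultimately show "indep k v \<and> y \<notin> spn k v" by blast
  next
    assume H: "indep k v \<and> y \<notin> spn k v"
    show "indep (Suc k) (v(k := y))" unfolding indep_def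
    proof (intro allI impI)
      fix c j assume c: "(\<Sum>j<Suc k. c j *s (v(k := y)) j) = 0" and j: "j < Suc k"
      have c': "(\<Sum>j<k. c j *s v j) + c k *s y = 0" using c s[of c] by simp
      have ck: "c k = 0"
      proof (rule ccontr)
        assume ne: "c k \<noteq> 0"
        have "y = (\<Sum>j<k. (- c j / c k) *s v j)"
        proof -
          have "c k *s y = - (\<Sum>j<k. c j *s v j)" using c' by (simp add: eq_neg_iff_add_eq_0 add.commute)
          moreover have "y = inverse (c k) *s (c k *s y)"
            using ne by (simp add: vector_smult_assoc)
          ultimately have "y = (1 / c k) *s (- (\<Sum>j<k. c j *s v j))"
            by (simp add: divide_inverse)
          also have "\<dots> = (\<Sum>j<k. (- c j / c k) *s v j)"
            unfolding vec.scale_minus_right vec.scale_sum_right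
            by (simp add: vector_smult_assoc sum_negf vec.scale_minus_left)
          finally show ?thesis .
        qed
        then have "y \<in> spn k v" by (rule spn_I)
        then show False using H by blast
      qed
      then have "(\<Sum>j<k. c j *s v j) = 0" using c' by simp
      then have "\<forall>j<k. c j = 0" using H[unfolded indep_def] by blast
      then show "c j = 0" using j ck less_Suc_eq by auto
    qed
  qed
qed


definition ind :: "nat \<Rightarrow> ('F::field ^ 'n) set \<Rightarrow> (nat \<Rightarrow> 'F ^ 'n) set" where
  "ind k S = {v \<in> {..<k} \<rightarrow>\<^sub>E S. indep k v}"

lemma ind_0: "ind 0 S = {\<lambda>_. undefined}"
  unfolding ind_def indep_def by auto

lemma ind_Suc:
  "ind (Suc k) S = (\<lambda>(v, y). v(k := y)) ` (SIGMA v:ind k S. S - spn k v)"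
proof
  show "(\<lambda>(v, y). v(k := y)) ` (SIGMA v:ind k S. S - spn k v) \<subseteq> ind (Suc k) S"
  proof clarsimp
    fix v y assume v: "v \<in> ind k S" and y: "y \<in> S" "y \<notin> spn k v"
    have "v(k := y) \<in> {..<Suc k} \<rightarrow>\<^sub>E S"
      using v y unfolding ind_def by (auto simp: PiE_def extensional_def Pi_def)
    moreover have "indep (Suc k) (v(k := y))" using v y unfolding ind_def by (simp add: indep_Suc)
    ultimately show "v(k := y) \<in> ind (Suc k) S" unfolding ind_def by simp
  qed
next
  show "ind (Suc k) S \<subseteq> (\<lambda>(v, y). v(k := y)) ` (SIGMA v:ind k S. S - spn k v)"
  proof
    fix w assume w: "w \<in> ind (Suc k) S"
    let ?v = "w(k := undefined)"
    have e: "w = ?v(k := w k)" by simp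
    have "indep (Suc k) (?v(k := w k))" using w unfolding ind_def by simp
    then have i: "indep k ?v" "w k \<notin> spn k ?v" unfolding indep_Suc by blast+
    have "?v \<in> {..<k} \<rightarrow>\<^sub>E S" "w k \<in> S" using w unfolding ind_def
      by (auto simp: PiE_def extensional_def Pi_def)
    then have "(?v, w k) \<in> (SIGMA v:ind k S. S - spn k v)" using i unfolding ind_def by auto
    then show "w \<in> (\<lambda>(v, y). v(k := y)) ` (SIGMA v:ind k S. S - spn k v)"
      by (rule image_eqI[rotated]) simp
  qed
qed

lemma inj_upd: "inj_on (\<lambda>(v, y). v(k := y)) (SIGMA v:ind k S. S - spn k v)"
proof (rule inj_onI, clarsimp)
  fix v y v' y'
  assume v: "v \<in> ind k S" "v' \<in> ind k S" and eq: "v(k := y) = v'(k := y')"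
  have "y = y'" using fun_cong[OF eq, of k] by simp
  moreover have "v = v'"
  proof
    fix j show "v j = v' j"
    proof (cases "j = k")
      case True then show ?thesis using v unfolding ind_def by (auto simp: PiE_def extensional_def)
    next
      case False then show ?thesis using fun_cong[OF eq, of j] by simp
    qed
  qed
  ultimately show "v = v' \<and> y = y'" by simp
qed

lemma card_ind:
  fixes S :: "('F::{field,finite} ^ 'n) set"
  assumes closed: "\<And>m x. (\<And>j. j < m \<Longrightarrow> x j \<in> S) \<Longrightarrow> spn m x \<subseteq> S"
  shows "card (ind k S) = (\<Prod>i<k. card S - CARD('F) ^ i)"
proof (induction k)
  case 0
  then show ?case by (simp add: ind_0)
next
  case (Suc k)
  have fin: "finite (ind k S)" unfolding ind_def
    by (rule finite_subset[of _ "{..<k} \<rightarrow>\<^sub>E S"]) (auto intro!: finite_PiE)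
  have "card (ind (Suc k) S) = card (SIGMA v:ind k S. S - spn k v)"
    unfolding ind_Suc by (rule card_image[OF inj_upd])
  also have "\<dots> = (\<Sum>v\<in>ind k S. card (S - spn k v))"
    using fin by (simp add: card_SigmaI)
  also have "\<dots> = (\<Sum>v\<in>ind k S. card S - CARD('F) ^ k)"
  proof (rule sum.cong[OF refl])
    fix v assume v: "v \<in> ind k S"
    have "spn k v \<subseteq> S" using v unfolding ind_def by (intro closed) (auto simp: PiE_def)
    then show "card (S - spn k v) = card S - CARD('F) ^ k"
      using v unfolding ind_def by (simp add: card_Diff_subset card_spn)
  qed
  also have "\<dots> = card (ind k S) * (card S - CARD('F) ^ k)" by simp
  finally show ?case using Suc by simp
qed


definition dirs :: "nat \<Rightarrow> ('F::field ^ 'n) set set" where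
  "dirs k = spn k ` ind k UNIV"

lemma fin_ind: "finite (ind k (S :: ('F::{field,finite} ^ 'n) set))"
  unfolding ind_def by (rule finite_subset[of _ "{..<k} \<rightarrow>\<^sub>E UNIV"]) (auto intro!: finite_PiE)

lemma fiber:
  fixes v0 :: "nat \<Rightarrow> 'F::{field,finite} ^ 'n"
  assumes v0: "v0 \<in> ind k UNIV"
  shows "{v \<in> ind k UNIV. spn k v = spn k v0} = ind k (spn k v0)"
proof
  show "{v \<in> ind k UNIV. spn k v = spn k v0} \<subseteq> ind k (spn k v0)"
  proof clarify
    fix v assume v: "v \<in> ind k UNIV" and e: "spn k v = spn k v0"
    then have "\<forall>j<k. v j \<in> spn k v0" using spn_base[of _ k v] by auto
    then show "v \<in> ind k (spn k v0)" using v unfolding ind_def by (auto simp: PiE_def Pi_def)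
  qed
next
  show "ind k (spn k v0) \<subseteq> {v \<in> ind k UNIV. spn k v = spn k v0}"
  proof clarify
    fix v assume v: "v \<in> ind k (spn k v0)"
    have sub: "spn k v \<subseteq> spn k v0" using v unfolding ind_def
      by (intro spn_subset) (auto simp: PiE_def Pi_def)
    have "card (spn k v) = card (spn k v0)"
      using v v0 unfolding ind_def by (simp add: card_spn)
    then have "spn k v = spn k v0" using sub by (intro card_subset_eq) auto
    moreover have "v \<in> ind k UNIV" using v unfolding ind_def by (auto simp: PiE_def Pi_def)
    ultimately show "v \<in> ind k UNIV \<and> spn k v = spn k v0" by simp
  qed
qed

lemma card_F_ge2: "CARD('F::{field,finite}) \<ge> 2"
proof -
  have "card {0::'F, 1} \<le> CARD('F)" by (rule card_mono) auto
  then show ?thesis by simp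
qed

lemma card_dirs_nat:
  "card (dirs k :: ('F::{field,finite} ^ 'n) set set) * (\<Prod>i<k. CARD('F) ^ k - CARD('F) ^ i)
    = (\<Prod>i<k. CARD('F) ^ CARD('n) - CARD('F) ^ i)"
proof -
  let ?q = "CARD('F)"
  have "card (ind k (UNIV :: ('F ^ 'n) set)) = (\<Prod>i<k. ?q ^ CARD('n) - ?q ^ i)"
    by (subst card_ind) auto
  moreover have "card (ind k (UNIV :: ('F ^ 'n) set)) =
      (\<Sum>W\<in>(dirs k :: ('F ^ 'n) set set). card {v \<in> ind k UNIV. spn k v = W})"
  proof -
    have f: "finite (ind k (UNIV :: ('F ^ 'n) set))" by (rule fin_ind)
    have e: "(\<Sum>_\<in>ind k (UNIV :: ('F ^ 'n) set). 1::nat) =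
      (\<Sum>y\<in>spn k ` ind k (UNIV :: ('F ^ 'n) set). \<Sum>_\<in>{x \<in> ind k (UNIV :: ('F ^ 'n) set). spn k x = y}. 1)"
      by (rule sum.image_gen[OF f, where h="\<lambda>_. 1::nat" and g="spn k"])
    then show ?thesis unfolding dirs_def by simp
  qed
  moreover have "card {v \<in> ind k UNIV. spn k v = W} = (\<Prod>i<k. ?q ^ k - ?q ^ i)"
    if W: "W \<in> (dirs k :: ('F ^ 'n) set set)" for W
  proof -
    obtain v0 where v0: "v0 \<in> ind k UNIV" "W = spn k v0" using W unfolding dirs_def by auto
    have "card {v \<in> ind k UNIV. spn k v = W} = card (ind k (spn k v0))"
      using fiber[OF v0(1)] v0(2) by simp
    also have "\<dots> = (\<Prod>i<k. card (spn k v0) - ?q ^ i)"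
      by (rule card_ind) (rule spn_subset)
    also have "card (spn k v0) = ?q ^ k" using v0 unfolding ind_def by (simp add: card_spn)
    finally show ?thesis .
  qed
  ultimately show ?thesis by simp
qed

lemma card_dirs:
  assumes "k \<le> CARD('n)"
  shows "real (card (dirs k :: ('F::{field,finite} ^ 'n) set set)) = gauss_binom CARD('n) k (real CARD('F))"
proof -
  let ?q = "CARD('F)" and ?n = "CARD('n)"
  define r where "r = real ?q"
  have r2: "r \<ge> 2" unfolding r_def using card_F_ge2[where 'F='F] by simp
  have pw: "real (?q ^ m - ?q ^ i) = r ^ i * (r ^ (m - i) - 1)" if "i \<le> m" for i m
  proof -
    have "?q ^ i \<le> ?q ^ m" using that card_F_ge2[where 'F='F] by (intro power_increasing) auto
    then have "real (?q ^ m - ?q ^ i) = r ^ m - r ^ i" unfolding r_def by (simp add: of_nat_diff)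
    also have "r ^ m = r ^ i * r ^ (m - i)" using that by (simp flip: power_add)
    finally show ?thesis by (simp add: algebra_simps)
  qed
  have A: "real (\<Prod>i<k. ?q ^ k - ?q ^ i) = (\<Prod>i<k. r ^ i) * (\<Prod>i<k. r ^ (i + 1) - 1)"
  proof -
    have "real (\<Prod>i<k. ?q ^ k - ?q ^ i) = (\<Prod>i<k. r ^ i * (r ^ (k - i) - 1))"
      by (simp add: pw)
    also have "\<dots> = (\<Prod>i<k. r ^ i) * (\<Prod>i<k. r ^ (k - i) - 1)" by (simp add: prod.distrib)
    also have "(\<Prod>i<k. r ^ (k - i) - 1) = (\<Prod>i<k. r ^ (k - Suc i + 1) - 1)"
      by (rule prod.cong) (auto simp: Suc_diff_Suc)
    also have "\<dots> = (\<Prod>i<k. r ^ (i + 1) - 1)"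
      by (rule prod.nat_diff_reindex)
    finally show ?thesis .
  qed
  have B: "real (\<Prod>i<k. ?q ^ ?n - ?q ^ i) = (\<Prod>i<k. r ^ i) * (\<Prod>i<k. r ^ (?n - i) - 1)"
  proof -
    have "real (\<Prod>i<k. ?q ^ ?n - ?q ^ i) = (\<Prod>i<k. r ^ i * (r ^ (?n - i) - 1))"
      using assms by (simp add: pw)
    also have "\<dots> = (\<Prod>i<k. r ^ i) * (\<Prod>i<k. r ^ (?n - i) - 1)" by (simp add: prod.distrib)
    finally show ?thesis .
  qed
  have nz1: "(\<Prod>i<k. r ^ i) \<noteq> 0" using r2 by simp
  have nzi: "r ^ (i + 1) - 1 \<noteq> 0" for i
  proof -
    have "1 \<le> r ^ i" using r2 by (intro one_le_power) auto
    then have "r * 1 \<le> r * r ^ i" using r2 by (intro mult_left_mono) auto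
    moreover have "r ^ (i + 1) = r * r ^ i" by simp
    ultimately have "r ^ (i + 1) \<ge> 2" using r2 by linarith
    then show ?thesis by linarith
  qed
  have nz2: "(\<Prod>i<k. r ^ (i + 1) - 1) \<noteq> 0"
    by (subst prod_zero_iff) (use nzi in auto)
  have "real (card (dirs k :: ('F ^ 'n) set set)) * ((\<Prod>i<k. r ^ i) * (\<Prod>i<k. r ^ (i + 1) - 1))
        = (\<Prod>i<k. r ^ i) * (\<Prod>i<k. r ^ (?n - i) - 1)"
    using arg_cong[OF card_dirs_nat[where 'F='F and 'n='n and k=k], of real] A B
    by (simp del: of_nat_prod)
  then have "real (card (dirs k :: ('F ^ 'n) set set)) = (\<Prod>i<k. r ^ (?n - i) - 1) / (\<Prod>i<k. r ^ (i + 1) - 1)"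
    using nz1 nz2 by (simp add: field_simps)
  then show ?thesis unfolding gauss_binom_def r_def by simp
qed


definition dotp :: "'F::field ^ 'n \<Rightarrow> 'F ^ 'n \<Rightarrow> 'F" where
  "dotp u x = (\<Sum>i\<in>UNIV. u $ i * x $ i)"

definition hyp :: "'F::field ^ 'n \<Rightarrow> ('F ^ 'n) set" where
  "hyp u = {x. dotp u x = 0}"

lemma dotp_add_right: "dotp u (x + y) = dotp u x + dotp u y"
  unfolding dotp_def by (simp add: distrib_left sum.distrib)

lemma dotp_add_left: "dotp (u + u') x = dotp u x + dotp u' x"
  unfolding dotp_def by (simp add: distrib_right sum.distrib)

lemma dotp_scale_right: "dotp u (a *s x) = a * dotp u x"
  unfolding dotp_def by (simp add: sum_distrib_left algebra_simps)

lemma dotp_scale_left: "dotp (a *s u) x = a * dotp u x"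
  unfolding dotp_def by (simp add: sum_distrib_left algebra_simps)

lemma dotp_neg_right: "dotp u (- x) = - dotp u x"
  unfolding dotp_def by (simp add: sum_negf)

lemma dotp_diff_right: "dotp u (x - y) = dotp u x - dotp u y"
  unfolding dotp_def by (simp add: algebra_simps sum_subtractf)

lemma dotp_zero_right [simp]: "dotp u 0 = 0"
  unfolding dotp_def by simp

lemma dotp_zero_left [simp]: "dotp 0 x = 0"
  unfolding dotp_def by simp

lemma dotp_sum_left: "dotp (\<Sum>i\<in>A. f i) x = (\<Sum>i\<in>A. dotp (f i) x)"
  by (induction A rule: infinite_finite_induct) (auto simp: dotp_add_left)

lemma dotp_sum_right: "dotp u (\<Sum>j<m. c j *s v j) = (\<Sum>j<m. c j * dotp u (v j))"
  for m :: nat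
  by (induction m) (auto simp: dotp_add_right dotp_scale_right)

lemma hyp_subspace: "vec.subspace (hyp u)"
  unfolding vec.subspace_def hyp_def by (auto simp: dotp_add_right dotp_scale_right)

lemma indep_inj: "indep k v \<Longrightarrow> inj_on v {..<k}"
proof (rule inj_onI, rule ccontr)
  fix i j assume I: "indep k v" and ij: "i \<in> {..<k}" "j \<in> {..<k}" "v i = v j" "i \<noteq> j"
  let ?c = "\<lambda>l. if l = i then (1::'a) else if l = j then -1 else 0"
  have "(\<Sum>l<k. ?c l *s v l) = (\<Sum>l<k. (if l = i then v i else 0) + (if l = j then - v j else 0))"
    by (rule sum.cong) (use ij in auto)
  also have "\<dots> = 0" using ij by (simp add: sum.distrib)
  finally have "?c i = 0" using I[unfolded indep_def, rule_format, of ?c i] ij by blast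
  then show False by simp
qed

lemma indep_vec_independent:
  assumes "indep k v"
  shows "vec.independent (v ` {..<k})"
proof -
  have inj: "inj_on v {..<k}" using assms by (rule indep_inj)
  show ?thesis unfolding vec.independent_explicit
  proof (intro conjI allI impI ballI)
    show "finite (v ` {..<k})" by simp
  next
    fix c b assume s: "(\<Sum>b\<in>v ` {..<k}. c b *s b) = 0" and b: "b \<in> v ` {..<k}"
    have "(\<Sum>j<k. c (v j) *s v j) = 0" using s by (simp add: sum.reindex[OF inj])
    then have "\<forall>j<k. c (v j) = 0" using assms[unfolded indep_def, rule_format, of "\<lambda>j. c (v j)"] by blast
    then show "c b = 0" using b by auto
  qed
qed

lemma spn_subspace: "vec.subspace (spn k v)"
  unfolding vec.subspace_def by (auto simp: spn_0 spn_add spn_scale)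

lemma vec_span_spn: "vec.span (v ` {..<k}) \<subseteq> spn k v"
  by (rule vec.span_minimal) (auto simp: spn_base spn_subspace)

lemma separate:
  fixes v :: "nat \<Rightarrow> 'F::{field,finite} ^ 'n"
  assumes I: "indep k v" and y: "y \<notin> spn k v"
  shows "\<exists>u. spn k v \<subseteq> hyp u \<and> dotp u y \<noteq> 0"
proof -
  let ?B = "v ` {..<k}"
  have yB: "y \<notin> vec.span ?B" using y vec_span_spn by blast
  have indB: "vec.independent (insert y ?B)"
    by (rule vec.independent_insertI[OF yB indep_vec_independent[OF I]])
  have vsp: "vector_space_pair ((*s) :: 'F \<Rightarrow> 'F ^ 'n \<Rightarrow> 'F ^ 'n) ((*) :: 'F \<Rightarrow> 'F \<Rightarrow> 'F)"
    by (simp add: vector_space_pair_def vec.vector_space_axioms vector_space_over_itself.vector_space_axioms)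
  obtain g where g: "Vector_Spaces.linear ((*s) :: 'F \<Rightarrow> 'F ^ 'n \<Rightarrow> 'F ^ 'n) ((*) :: 'F \<Rightarrow> 'F \<Rightarrow> 'F) g"
    and gB: "\<forall>x\<in>insert y ?B. g x = (if x = y then 1 else 0)"
    using vector_space_pair.linear_independent_extend[OF vsp indB, of "\<lambda>x. if x = y then 1 else 0"]
    by blast
  interpret lin: Vector_Spaces.linear "(*s) :: 'F \<Rightarrow> 'F ^ 'n \<Rightarrow> 'F ^ 'n" "(*) :: 'F \<Rightarrow> 'F \<Rightarrow> 'F" g
    by (rule g)
  define u where "u = (\<chi> i. g (axis i 1))"
  have gu: "g x = dotp u x" for x
  proof -
    have "g x = g (\<Sum>i\<in>UNIV. x $ i *s axis i 1)" by (simp add: basis_expansion)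
    also have "\<dots> = (\<Sum>i\<in>UNIV. x $ i * g (axis i 1))" by (simp add: lin.sum lin.scale)
    also have "\<dots> = dotp u x" unfolding dotp_def u_def by (simp add: mult.commute)
    finally show ?thesis .
  qed
  have "spn k v \<subseteq> hyp u"
  proof
    fix x assume "x \<in> spn k v"
    then obtain c where x: "x = (\<Sum>j<k. c j *s v j)" unfolding spn_def by auto
    have "v j \<noteq> y" if "j < k" for j using y spn_base[OF that, of v] by auto
    then have "\<forall>j<k. dotp u (v j) = 0" using gB gu by auto
    then show "x \<in> hyp u" unfolding hyp_def x by (simp add: dotp_sum_right)
  qed
  moreover have "dotp u y \<noteq> 0" using gB gu by simp
  ultimately show ?thesis by blast
qed


lemma vec_dim_UNIV: "vec.dim (UNIV :: ('F::field ^ 'n) set) = CARD('n)"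
  by (simp add: card_cart_basis)

lemma vec_dim_le: "vec.dim (S :: ('F::field ^ 'n) set) \<le> CARD('n)"
  using vec.dim_subset[of S UNIV] vec_dim_UNIV[where 'F='F and 'n='n] by simp

lemma dim_hyp: "CARD('n) \<le> vec.dim (hyp (u :: 'F::field ^ 'n)) + 1"
proof (cases "u = 0")
  case True
  then have "hyp u = UNIV" unfolding hyp_def by auto
  then show ?thesis using vec_dim_UNIV[where 'F='F and 'n='n] by simp
next
  case False
  then obtain i where ui: "u $ i \<noteq> 0" by (metis vec_eq_iff zero_index)
  let ?e = "axis i (1::'F) :: 'F ^ 'n"
  let ?T = "vec.span {?e}"
  have sums: "{x + y |x y. x \<in> hyp u \<and> y \<in> ?T} = UNIV"
  proof (safe, simp)
    fix z :: "'F ^ 'n"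
    let ?a = "dotp u z / u $ i"
    have "dotp u ?e = u $ i" unfolding dotp_def axis_def
      by (simp add: if_distrib sum.delta cong: if_cong)
    then have "z - ?a *s ?e \<in> hyp u" using ui unfolding hyp_def by (simp add: dotp_diff_right dotp_scale_right)
    moreover have "?a *s ?e \<in> ?T" by (simp add: vec.span_base vec.span_scale)
    moreover have "z = (z - ?a *s ?e) + ?a *s ?e" by simp
    ultimately show "\<exists>x y. z = x + y \<and> x \<in> hyp u \<and> y \<in> ?T" by blast
  qed
  have "vec.dim {x + y |x y. x \<in> hyp u \<and> y \<in> ?T} + vec.dim (hyp u \<inter> ?T) = vec.dim (hyp u) + vec.dim ?T"
    by (rule vec.dim_sums_Int[OF hyp_subspace vec.subspace_span])
  moreover have "vec.dim ?T \<le> 1"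
    using vec.dim_le_card[of "?T" "{?e}"] by simp
  ultimately show ?thesis unfolding sums vec_dim_UNIV by linarith
qed

lemma dim_hyp2: "CARD('n) \<le> vec.dim (hyp (u :: 'F::field ^ 'n) \<inter> hyp v) + 2"
proof -
  have "vec.dim {x + y |x y. x \<in> hyp u \<and> y \<in> hyp v} + vec.dim (hyp u \<inter> hyp v) = vec.dim (hyp u) + vec.dim (hyp v)"
    by (rule vec.dim_sums_Int[OF hyp_subspace hyp_subspace])
  moreover have "vec.dim {x + y |x y. x \<in> hyp u \<and> y \<in> hyp v} \<le> CARD('n)" by (rule vec_dim_le)
  moreover note dim_hyp[of u] dim_hyp[of v]
  ultimately show ?thesis by linarith
qed

lemma subspace_dirs:
  fixes S :: "('F::{field,finite} ^ 'n) set"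
  assumes S: "vec.subspace S" and k: "k \<le> vec.dim S"
  shows "\<exists>W\<in>dirs k. W \<subseteq> S"
proof -
  obtain B where B: "B \<subseteq> S" "vec.independent B" "card B = vec.dim S"
    using vec.basis_exists[of S] by metis
  obtain B' where B': "B' \<subseteq> B" "card B' = k" "finite B'"
    using obtain_subset_with_card_n[of k B] B k by auto
  obtain h where h: "bij_betw h {0..<k} B'" using ex_bij_betw_nat_finite[OF B'(3)] B'(2) by auto
  have indB': "vec.independent B'" using vec.independent_mono[OF B(2) B'(1)] .
  define v where "v = restrict h {..<k}"
  have vh: "v j = h j" if "j < k" for j using that unfolding v_def by simp
  have bij: "bij_betw v {..<k} B'" using h unfolding v_def
    by (simp add: atLeast0LessThan bij_betw_def inj_on_def)
  have "indep k v" unfolding indep_def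
  proof (intro allI impI)
    fix c j assume c: "(\<Sum>j<k. c j *s v j) = 0" and j: "j < k"
    let ?c = "\<lambda>b. c (the_inv_into {..<k} v b)"
    have inj: "inj_on v {..<k}" and img: "v ` {..<k} = B'" using bij by (auto simp: bij_betw_def)
    have "(\<Sum>b\<in>B'. ?c b *s b) = (\<Sum>b\<in>v ` {..<k}. ?c b *s b)" by (simp add: img)
    also have "\<dots> = (\<Sum>l<k. ?c (v l) *s v l)" by (simp add: sum.reindex[OF inj])
    also have "\<dots> = (\<Sum>l<k. c l *s v l)"
      by (rule sum.cong[OF refl]) (use bij in \<open>simp add: bij_betw_def the_inv_into_f_f\<close>)
    finally have "(\<Sum>b\<in>B'. ?c b *s b) = 0" using c by simp
    then have "\<forall>b\<in>B'. ?c b = 0"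
      using indB'[unfolded vec.independent_explicit, THEN conjunct2, rule_format, of ?c] by blast
    moreover have "v j \<in> B'" using bij j by (auto simp: bij_betw_def)
    ultimately have "?c (v j) = 0" by blast
    then show "c j = 0" using bij j by (simp add: bij_betw_def the_inv_into_f_f)
  qed
  moreover have "v \<in> {..<k} \<rightarrow>\<^sub>E UNIV" unfolding v_def by simp
  ultimately have "spn k v \<in> dirs k" unfolding dirs_def ind_def by blast
  moreover have "spn k v \<subseteq> S"
  proof
    fix x assume "x \<in> spn k v"
    then obtain c where x: "x = (\<Sum>j<k. c j *s v j)" unfolding spn_def by auto
    have "v j \<in> S" if "j < k" for j using bij that B'(1) B(1) by (auto simp: bij_betw_def)
    then show "x \<in> S" unfolding x
      by (intro vec.subspace_sum[OF S]) (simp add: vec.subspace_scale[OF S])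
  qed
  ultimately show ?thesis by blast
qed

lemma dirs_in_hyp2:
  assumes "k + 2 \<le> CARD('n)"
  shows "\<exists>W\<in>(dirs k :: ('F::{field,finite} ^ 'n) set set). W \<subseteq> hyp u \<inter> hyp v"
proof -
  have "vec.subspace (hyp u \<inter> hyp v)" by (intro vec.subspace_inter hyp_subspace)
  moreover have "k \<le> vec.dim (hyp u \<inter> hyp v)" using dim_hyp2[of u v] assms by linarith
  ultimately show ?thesis by (rule subspace_dirs)
qed




lemma dirs_subspace: "W \<in> dirs k \<Longrightarrow> vec.subspace W"
  unfolding dirs_def using spn_subspace by blast

lemma mem_coset: "vec.subspace W \<Longrightarrow> x \<in> (+) p ` W \<longleftrightarrow> x - p \<in> W"
proof
  assume "x \<in> (+) p ` W" then show "x - p \<in> W" by auto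
next
  assume "x - p \<in> W"
  then show "x \<in> (+) p ` W" by (intro image_eqI[where x="x - p"]) auto
qed

lemma coset_eq:
  assumes W: "vec.subspace W" and d: "p' - p \<in> W"
  shows "(+) p ` W = (+) p' ` W"
proof -
  have "x - p \<in> W \<longleftrightarrow> x - p' \<in> W" for x
  proof -
    have "x - p = (x - p') + (p' - p)" "x - p' = (x - p) - (p' - p)" by simp_all
    then show ?thesis using W d by (metis vec.subspace_add vec.subspace_diff)
  qed
  then show ?thesis
  proof (intro set_eqI)
    fix x assume h: "\<And>x. x - p \<in> W \<longleftrightarrow> x - p' \<in> W"
    show "x \<in> (+) p ` W \<longleftrightarrow> x \<in> (+) p' ` W"
      using mem_coset[OF W, of x p] mem_coset[OF W, of x p'] h[of x] by simp
  qed
qed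

lemma coset_meet:
  assumes W: "vec.subspace W" and m: "x \<in> (+) p ` W" "x \<in> (+) p' ` W"
  shows "(+) p ` W = (+) p' ` W"
proof -
  have "x - p \<in> W" "x - p' \<in> W" using m by (auto simp: mem_coset[OF W])
  then have "(x - p) - (x - p') \<in> W" using W by (rule vec.subspace_diff[rotated])
  then show ?thesis using coset_eq[OF W] by simp
qed

definition dirof :: "('F::field ^ 'n) set \<Rightarrow> ('F ^ 'n) set" where
  "dirof K = {x - y | x y. x \<in> K \<and> y \<in> K}"

lemma dirof_coset: "vec.subspace W \<Longrightarrow> dirof ((+) p ` W) = W"
  unfolding dirof_def
proof safe
  fix a b assume "vec.subspace W" "a \<in> W" "b \<in> W"
  then show "p + a - (p + b) \<in> W" by (simp add: vec.subspace_diff)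
next
  fix x assume W: "vec.subspace W" and x: "x \<in> W"
  have "x = (p + x) - (p + 0)" by simp
  moreover have "p + x \<in> (+) p ` W" by (rule imageI[OF x])
  moreover have "p + 0 \<in> (+) p ` W" by (rule imageI[OF vec.subspace_0[OF W]])
  ultimately show "\<exists>a b. x = a - b \<and> a \<in> (+) p ` W \<and> b \<in> (+) p ` W" by metis
qed

lemma aff_iff: "K \<in> affine_kspaces k \<longleftrightarrow> (\<exists>p. \<exists>W\<in>dirs k. K = (+) p ` W)"
proof
  assume "K \<in> affine_kspaces k"
  then have "affine_kspace k K" unfolding affine_kspaces_def by simp
  then obtain p v where v: "indep k v" "K = (+) p ` spn k v"
    unfolding affine_kspace_iff by blast
  have "restrict v {..<k} \<in> ind k UNIV" using v unfolding ind_def by (simp add: indep_restrict)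
  then have "spn k (restrict v {..<k}) \<in> dirs k" unfolding dirs_def by (rule imageI)
  then have "spn k v \<in> dirs k" by (simp only: spn_restrict)
  then show "\<exists>p. \<exists>W\<in>dirs k. K = (+) p ` W" using v by blast
next
  assume "\<exists>p. \<exists>W\<in>dirs k. K = (+) p ` W"
  then obtain p W where "W \<in> dirs k" "K = (+) p ` W" by blast
  then obtain v where "v \<in> ind k UNIV" "K = (+) p ` spn k v" unfolding dirs_def by blast
  then have "indep k v" "K = (+) p ` spn k v" unfolding ind_def by simp_all
  then have "affine_kspace k K" unfolding affine_kspace_iff by blast
  then show "K \<in> affine_kspaces k" unfolding affine_kspaces_def by simp
qed

lemma part_sum:
  fixes w :: "'F::{field,finite} ^ 'n \<Rightarrow> real"
  assumes cl: "\<forall>K\<in>affine_kspaces k. (if K \<in> L then 1 else 0) = (\<Sum>P\<in>K. w P)"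
    and f1: "\<And>p. f p \<in> affine_kspaces k" and f2: "\<And>p. p \<in> f p"
    and f3: "\<And>p p'. f p \<inter> f p' \<noteq> {} \<Longrightarrow> f p = f p'"
  shows "real (card (range f \<inter> L)) = (\<Sum>P\<in>UNIV. w P)"
proof -
  have U: "\<Union> (range f) = UNIV"
  proof (intro set_eqI iffI)
    fix x :: "'F ^ 'n" show "x \<in> \<Union> (range f)" using f2[of x] by (intro UnionI[OF rangeI])
  qed simp
  have pw: "\<forall>A\<in>range f. \<forall>B\<in>range f. A \<noteq> B \<longrightarrow> A \<inter> B = {}"
  proof (intro ballI impI)
    fix A B assume "A \<in> range f" "B \<in> range f" "A \<noteq> B"
    then obtain a b where "A = f a" "B = f b" "f a \<noteq> f b" by blast
    then show "A \<inter> B = {}" using f3[of a b] by blast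
  qed
  have "(\<Sum>P\<in>UNIV. w P) = (\<Sum>P\<in>\<Union> (range f). w P)" by (simp only: U)
  also have "\<dots> = (\<Sum>K\<in>range f. \<Sum>P\<in>K. w P)"
    using sum.Union_disjoint[of "range f" w] pw by simp
  also have "\<dots> = (\<Sum>K\<in>range f. (if K \<in> L then 1 else 0))"
  proof (rule sum.cong[OF refl])
    fix K assume "K \<in> range f"
    then have "K \<in> affine_kspaces k" using f1 by blast
    then show "(\<Sum>P\<in>K. w P) = (if K \<in> L then 1 else 0)" using cl by simp
  qed
  also have "\<dots> = real (card (range f \<inter> L))"
    by (simp add: sum.If_cases Int_def)
  finally show ?thesis by simp
qed



theorem theorem6p5:
  fixes L :: "('F::{field,finite} ^ 'n) set set" and k :: nat
  assumes "k \<ge> 1" and "CARD('n) \<ge> 2 * k + 1"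
    and "cameron_liebler k L"
    and "cl_parameter k L = 1"
  shows "\<exists>P :: 'F ^ 'n. L = {K \<in> affine_kspaces k. P \<in> K}"
proof -
  have k2: "k + 2 \<le> CARD('n)" using assms(1,2) by linarith
  obtain w :: "'F ^ 'n \<Rightarrow> real" where Lsub: "L \<subseteq> affine_kspaces k"
    and cl: "\<forall>K\<in>affine_kspaces k. (if K \<in> L then 1 else 0) = (\<Sum>P\<in>K. w P)"
    using assms(3) unfolding cameron_liebler_def by blast
  define c where "c = (\<Sum>P\<in>UNIV. w P)"
  have hit: "real (card (range f \<inter> L)) = c"
    if "\<And>p. f p \<in> affine_kspaces k" "\<And>p. p \<in> f p" "\<And>p p'. f p \<inter> f p' \<noteq> {} \<Longrightarrow> f p = f p'"
    for f :: "'F ^ 'n \<Rightarrow> ('F ^ 'n) set"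
    unfolding c_def by (rule part_sum[OF cl that])
  define cls where "cls W = range (\<lambda>p. (+) p ` W) \<inter> L" for W :: "('F ^ 'n) set"
  have cls_card: "real (card (cls W)) = c" if W: "W \<in> (dirs k :: ('F ^ 'n) set set)" for W
    unfolding cls_def
  proof (rule hit)
    have S: "vec.subspace W" using W by (rule dirs_subspace)
    show "(+) p ` W \<in> affine_kspaces k" for p using W aff_iff by blast
    show "p \<in> (+) p ` W" for p using vec.subspace_0[OF S] by (intro image_eqI[where x=0]) auto
    show "(+) p ` W = (+) p' ` W" if "(+) p ` W \<inter> (+) p' ` W \<noteq> {}" for p p'
      using that coset_meet[OF S] by blast
  qed
  have fin_dirs: "finite (dirs k :: ('F ^ 'n) set set)" unfolding dirs_def by (simp add: fin_ind)
  have Lunion: "L = (\<Union>W\<in>(dirs k :: ('F ^ 'n) set set). cls W)"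
  proof
    show "L \<subseteq> (\<Union>W\<in>(dirs k :: ('F ^ 'n) set set). cls W)"
    proof
      fix K assume K: "K \<in> L"
      then obtain p W where "W \<in> (dirs k :: ('F ^ 'n) set set)" "K = (+) p ` W" using Lsub aff_iff by blast
      then show "K \<in> (\<Union>W\<in>(dirs k :: ('F ^ 'n) set set). cls W)" unfolding cls_def using K by blast
    qed
  qed (auto simp: cls_def)
  have cardL: "card L = (\<Sum>W\<in>(dirs k :: ('F ^ 'n) set set). card (cls W))"
    unfolding Lunion
  proof (rule card_UN_disjoint[OF fin_dirs])
    show "\<forall>W\<in>(dirs k :: ('F ^ 'n) set set). finite (cls W)" by simp
    show "\<forall>W\<in>(dirs k :: ('F ^ 'n) set set). \<forall>W'\<in>(dirs k :: ('F ^ 'n) set set). W \<noteq> W' \<longrightarrow> cls W \<inter> cls W' = {}"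
    proof (intro ballI impI)
      fix W W' assume W: "W \<in> (dirs k :: ('F ^ 'n) set set)" "W' \<in> (dirs k :: ('F ^ 'n) set set)" "W \<noteq> W'"
      show "cls W \<inter> cls W' = {}"
      proof (rule ccontr)
        assume "cls W \<inter> cls W' \<noteq> {}"
        then obtain p p' where "(+) p ` W = (+) p' ` W'" unfolding cls_def by blast
        then have "dirof ((+) p ` W) = dirof ((+) p' ` W')" by simp
        then show False using dirof_coset[OF dirs_subspace[OF W(1)]] dirof_coset[OF dirs_subspace[OF W(2)]] W(3)
          by simp
      qed
    qed
  qed
  have "real (card L) = (\<Sum>W\<in>(dirs k :: ('F ^ 'n) set set). real (card (cls W)))" unfolding cardL by simp
  also have "\<dots> = real (card (dirs k :: ('F ^ 'n) set set)) * c" using cls_card by simp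
  finally have cardL2: "real (card L) = real (card (dirs k :: ('F ^ 'n) set set)) * c" .
  have G: "real (card (dirs k :: ('F ^ 'n) set set)) = gauss_binom CARD('n) k (real CARD('F))"
    by (rule card_dirs) (use assms(2) in linarith)
  have "real (card L) / real (card (dirs k :: ('F ^ 'n) set set)) = 1"
    using assms(4) unfolding cl_parameter_def G .
  then have Gnz: "real (card (dirs k :: ('F ^ 'n) set set)) \<noteq> 0" and
    eqL: "real (card L) = real (card (dirs k :: ('F ^ 'n) set set))"
    by (auto simp: divide_eq_1_iff split: if_splits)
  have c1: "c = 1" using cardL2 eqL Gnz by simp
  have one: "card (range f \<inter> L) = 1"
    if "\<And>p. f p \<in> affine_kspaces k" "\<And>p. p \<in> f p" "\<And>p p'. f p \<inter> f p' \<noteq> {} \<Longrightarrow> f p = f p'"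
    for f :: "'F ^ 'n \<Rightarrow> ('F ^ 'n) set"
    using hit[OF that] c1 by simp
  have exm: "\<exists>p. (+) p ` W \<in> L" if W: "W \<in> (dirs k :: ('F ^ 'n) set set)" for W
  proof -
    have "card (cls W) = 1" using cls_card[OF W] c1 by simp
    then have "cls W \<noteq> {}" by auto
    then show ?thesis unfolding cls_def by blast
  qed
  have cos: "p1 - p2 \<in> M"
    if M: "vec.subspace M" and W1: "W1 \<in> (dirs k :: ('F ^ 'n) set set)" "W1 \<subseteq> M" and W2: "W2 \<in> (dirs k :: ('F ^ 'n) set set)" "W2 \<subseteq> M"
      and X1: "(+) p1 ` W1 \<in> L" and X2: "(+) p2 ` W2 \<in> L"
    for M W1 W2 p1 p2
  proof (rule ccontr)
    assume nM: "p1 - p2 \<notin> M"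
    have S1: "vec.subspace W1" using W1(1) by (rule dirs_subspace)
    have S2: "vec.subspace W2" using W2(1) by (rule dirs_subspace)
    define f where "f p = (if p - p1 \<in> M then (+) p ` W1 else (+) p ` W2)" for p
    have a1: "(+) p ` W1 \<in> affine_kspaces k" for p using W1(1) aff_iff by blast
    have a2: "(+) p ` W2 \<in> affine_kspaces k" for p using W2(1) aff_iff by blast
    have f1: "f p \<in> affine_kspaces k" for p unfolding f_def using a1 a2 by simp
    have f2: "p \<in> f p" for p unfolding f_def
      using vec.subspace_0[OF S1] vec.subspace_0[OF S2] by (auto intro: image_eqI[where x=0])
    have zM: "z - p \<in> M" if "z \<in> f p" for z p
    proof (cases "p - p1 \<in> M")
      case True then have "z - p \<in> W1" using that S1 unfolding f_def by (simp add: mem_coset)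
      then show ?thesis using W1(2) by blast
    next
      case False then have "z - p \<in> W2" using that S2 unfolding f_def by (simp add: mem_coset)
      then show ?thesis using W2(2) by blast
    qed
    have f3: "f p = f p'" if m: "f p \<inter> f p' \<noteq> {}" for p p'
    proof -
      obtain z where z: "z \<in> f p" "z \<in> f p'" using m by blast
      have "(z - p') - (z - p) \<in> M" by (rule vec.subspace_diff[OF M zM[OF z(2)] zM[OF z(1)]])
      then have pp: "p - p' \<in> M" by simp
      have iff: "p - p1 \<in> M \<longleftrightarrow> p' - p1 \<in> M"
      proof
        assume "p - p1 \<in> M"
        then have "(p - p1) - (p - p') \<in> M" using pp by (rule vec.subspace_diff[OF M])
        then show "p' - p1 \<in> M" by simp
      next
        assume "p' - p1 \<in> M"
        then have "(p' - p1) + (p - p') \<in> M" using pp by (rule vec.subspace_add[OF M])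
        then show "p - p1 \<in> M" by simp
      qed
      show ?thesis
      proof (cases "p - p1 \<in> M")
        case True
        then have "f p = (+) p ` W1" "f p' = (+) p' ` W1" using iff unfolding f_def by auto
        then show ?thesis using coset_meet[OF S1] z by metis
      next
        case False
        then have "f p = (+) p ` W2" "f p' = (+) p' ` W2" using iff unfolding f_def by auto
        then show ?thesis using coset_meet[OF S2] z by metis
      qed
    qed
    have e1: "f p1 = (+) p1 ` W1" unfolding f_def using vec.subspace_0[OF M] by simp
    have "p2 - p1 \<notin> M"
    proof
      assume "p2 - p1 \<in> M"
      then have "- (p2 - p1) \<in> M" by (rule vec.subspace_neg[OF M])
      then show False using nM by simp
    qed
    then have e2: "f p2 = (+) p2 ` W2" unfolding f_def by simp
    have ne: "(+) p1 ` W1 \<noteq> (+) p2 ` W2"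
    proof
      assume eq: "(+) p1 ` W1 = (+) p2 ` W2"
      have "p1 \<in> (+) p1 ` W1" using f2[of p1] e1 by simp
      then have "p1 - p2 \<in> W2" using eq mem_coset[OF S2] by simp
      then show False using nM W2(2) by blast
    qed
    have r1: "(+) p1 ` W1 \<in> range f" using e1 by (metis rangeI)
    have r2: "(+) p2 ` W2 \<in> range f" using e2 by (metis rangeI)
    have "{(+) p1 ` W1, (+) p2 ` W2} \<subseteq> range f \<inter> L"
      using X1 X2 r1 r2 by simp
    then have "card {(+) p1 ` W1, (+) p2 ` W2} \<le> card (range f \<inter> L)"
      by (intro card_mono) auto
    then show False using one[OF f1 f2 f3] ne by simp
  qed
  have exW: "\<exists>W\<in>(dirs k :: ('F ^ 'n) set set). W \<subseteq> hyp u \<inter> hyp u'" for u u' :: "'F ^ 'n"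
    by (rule dirs_in_hyp2[OF k2])
  have exWp: "\<exists>W p. W \<in> (dirs k :: ('F ^ 'n) set set) \<and> W \<subseteq> hyp u \<inter> hyp u' \<and> (+) p ` W \<in> L" for u u' :: "'F ^ 'n"
    using exW[of u u'] exm by blast
  define pt where "pt u = (SOME p. \<exists>W. W \<in> (dirs k :: ('F ^ 'n) set set) \<and> W \<subseteq> hyp u \<and> (+) p ` W \<in> L)" for u :: "'F ^ 'n"
  have pt: "\<exists>W. W \<in> (dirs k :: ('F ^ 'n) set set) \<and> W \<subseteq> hyp u \<and> (+) (pt u) ` W \<in> L" for u
  proof -
    have "\<exists>p W. W \<in> (dirs k :: ('F ^ 'n) set set) \<and> W \<subseteq> hyp u \<and> (+) p ` W \<in> L" using exWp[of u u] by blast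
    then show ?thesis unfolding pt_def by (rule someI_ex)
  qed
  define val where "val u = dotp u (pt u)" for u :: "'F ^ 'n"
  have key: "dotp u p = val u" if "W \<in> (dirs k :: ('F ^ 'n) set set)" "W \<subseteq> hyp u" "(+) p ` W \<in> L" for u p W
  proof -
    obtain W0 where W0: "W0 \<in> (dirs k :: ('F ^ 'n) set set)" "W0 \<subseteq> hyp u" "(+) (pt u) ` W0 \<in> L" using pt[of u] by blast
    have "p - pt u \<in> hyp u" by (rule cos[OF hyp_subspace that(1,2) W0(1,2) that(3) W0(3)])
    then show ?thesis unfolding val_def hyp_def by (simp add: dotp_diff_right)
  qed
  have val_add: "val (u + u') = val u + val u'" for u u'
  proof -
    obtain W p where Wp: "W \<in> (dirs k :: ('F ^ 'n) set set)" "W \<subseteq> hyp u \<inter> hyp u'" "(+) p ` W \<in> L" using exWp[of u u'] by blast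
    have "W \<subseteq> hyp (u + u')" using Wp(2) unfolding hyp_def by (force simp: dotp_add_left)
    then have "val (u + u') = dotp (u + u') p" using key Wp by metis
    also have "\<dots> = dotp u p + dotp u' p" by (simp add: dotp_add_left)
    also have "dotp u p = val u" using key[of W u p] Wp by blast
    also have "dotp u' p = val u'" using key[of W u' p] Wp by blast
    finally show ?thesis .
  qed
  have val_scale: "val (a *s u) = a * val u" for a u
  proof -
    obtain W p where Wp: "W \<in> (dirs k :: ('F ^ 'n) set set)" "W \<subseteq> hyp u \<inter> hyp u" "(+) p ` W \<in> L" using exWp[of u u] by blast
    have "W \<subseteq> hyp (a *s u)" using Wp(2) unfolding hyp_def by (force simp: dotp_scale_left)
    then have "val (a *s u) = dotp (a *s u) p" using key Wp by metis
    also have "\<dots> = a * dotp u p" by (simp add: dotp_scale_left)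
    also have "dotp u p = val u" using key[of W u p] Wp by blast
    finally show ?thesis .
  qed
  have val_0: "val 0 = 0" using val_scale[of 0 0] by simp
  have val_sum: "val (\<Sum>i\<in>A. g i) = (\<Sum>i\<in>A. val (g i))" for A :: "'n set" and g
    by (induction A rule: infinite_finite_induct) (auto simp: val_0 val_add)
  define P where "P = (\<chi> i. val (axis i 1))"
  have valP: "val u = dotp u P" for u
  proof -
    have "val u = val (\<Sum>i\<in>UNIV. u $ i *s axis i 1)" by (simp add: basis_expansion)
    also have "\<dots> = (\<Sum>i\<in>UNIV. u $ i * val (axis i 1))" by (simp add: val_sum val_scale)
    also have "\<dots> = dotp u P" unfolding dotp_def P_def by simp
    finally show ?thesis .
  qed
  have allP: "P \<in> X" if X: "X \<in> L" for X
  proof -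
    obtain p W where W: "W \<in> (dirs k :: ('F ^ 'n) set set)" "X = (+) p ` W" using X Lsub aff_iff by blast
    then obtain v where v: "v \<in> ind k UNIV" "W = spn k v" unfolding dirs_def by blast
    have S: "vec.subspace W" using W(1) by (rule dirs_subspace)
    show ?thesis
    proof (rule ccontr)
      assume "P \<notin> X"
      then have "P - p \<notin> spn k v" using W(2) v(2) mem_coset[OF S] by simp
      then obtain u where u: "spn k v \<subseteq> hyp u" "dotp u (P - p) \<noteq> 0"
        using separate[of k v] v(1) unfolding ind_def by blast
      have "dotp u p = val u" using key[of W u p] W X u(1) v(2) by blast
      then show False using u(2) valP[of u] by (simp add: dotp_diff_right)
    qed
  qed
  show ?thesis
  proof (intro exI[of _ P] set_eqI iffI)
    fix K assume "K \<in> L"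
    then show "K \<in> {K \<in> affine_kspaces k. P \<in> K}" using Lsub allP by blast
  next
    fix K assume K: "K \<in> {K \<in> affine_kspaces k. P \<in> K}"
    then obtain p W where W: "W \<in> (dirs k :: ('F ^ 'n) set set)" "K = (+) p ` W" using aff_iff by blast
    obtain p' where p': "(+) p' ` W \<in> L" using exm[OF W(1)] by blast
    have "P \<in> (+) p' ` W" using allP[OF p'] .
    moreover have "P \<in> (+) p ` W" using K W(2) by simp
    ultimately have "(+) p ` W = (+) p' ` W" using coset_meet[OF dirs_subspace[OF W(1)]] by metis
    then show "K \<in> L" using p' W(2) by simp
  qed
qed

end
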